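(* Let $(q_n)$ be the Fibonacci Quilt sequence and let $m$ be a positive integer. If $m=c_1q_1+c_2q_2+\cdots+c_nq_n$ with nonnegative integers $c_i$ is any decomposition $\mathcal D(m)$ of $m$ as a sum of Fibonacci Quilt numbers (not necessarily FQ-legal, repetitions allowed), with number of summands $c_1+\cdots+c_n$, then the number of summands of the Greedy-6 decomposition $\mathcal G(m)$ is at most $c_1+c_2+\cdots+c_n$.
   Context: Given an increasing sequence of positive integers $(q_i)_{i\ge1}$, an FQ-legal decomposition of an integer $m\ge0$ is an expression $m=q_{\ell_1}+q_{\ell_2}+\cdots+q_{\ell_t}$ ($t\ge0$, the empty sum representing $0$) with distinct indices $\ell_1>\ell_2>\cdots>\ell_t$ such that $|\ell_i-\ell_j|\notin\{1,3,4\}$ for all $i,j$, and $\{1,3\}\not\subset\{\ell_1,\dots,\ell_t\}$. The Fibonacci Quilt sequence is the increasing sequence of positive integers $(q_i)_{i\ge1}$ in which each $q_i$ is the smallest positive integer having no FQ-legal decomposition using only $q_1,\dots,q_{i-1}$. Its first terms are $1,2,3,4,5,7,9,12,16,21,28,37,49,\dots$. The Greedy-6 decomposition $\mathcal G(m)$ of a positive integer $m$ is defined recursively: if $m=q_n$ for some $n$, then $\mathcal G(m)=q_n$; if $m=6$, then $\mathcal G(6)=q_4+q_2$; otherwise ($m\ge q_6=7$ and $m$ not a term of the sequence) let $\ell_1$ be such that $q_{\ell_1}<m<q_{\ell_1+1}$, set $x=m-q_{\ell_1}>0$, and $\mathcal G(m)=q_{\ell_1}+\mathcal G(x)$. *)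

theory Defs
  imports Main
begin

definition FQ_legal :: "nat set \<Rightarrow> bool" where
  "FQ_legal S \<longleftrightarrow> finite S \<and> 0 \<notin> S \<and>
     (\<forall>i\<in>S. \<forall>j\<in>S. (if i \<le> j then j - i else i - j) \<notin> {1, 3, 4}) \<and>
     \<not> ({1, 3} \<subseteq> S)"

definition has_FQ_legal :: "nat list \<Rightarrow> nat \<Rightarrow> bool" where
  "has_FQ_legal l x \<longleftrightarrow>
     (\<exists>S. S \<subseteq> {1..length l} \<and> FQ_legal S \<and> (\<Sum>i\<in>S. l ! (i - 1)) = x)"

primrec FQ_prefix :: "nat \<Rightarrow> nat list" where
  "FQ_prefix 0 = []"
| "FQ_prefix (Suc n) = FQ_prefix n @ [LEAST x::nat. 0 < x \<and> \<not> has_FQ_legal (FQ_prefix n) x]"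

text \<open>The Fibonacci Quilt sequence, 1-indexed: fq 1 = 1, fq 2 = 2, ...\<close>
definition fq :: "nat \<Rightarrow> nat" where
  "fq i = FQ_prefix i ! (i - 1)"

text \<open>Greedy-6 decomposition, as a relation between m and the list of its summands
  (largest first), following the recursive definition clause by clause.\<close>
inductive greedy6 :: "nat \<Rightarrow> nat list \<Rightarrow> bool" where
  is_term: "n \<ge> 1 \<Longrightarrow> greedy6 (fq n) [fq n]"
| six: "greedy6 6 [fq 4, fq 2]"
| step: "\<lbrakk> m \<noteq> 6; \<forall>n\<ge>1. m \<noteq> fq n; l \<ge> 1; fq l < m; m < fq (l + 1);
           greedy6 (m - fq l) L \<rbrakk> \<Longrightarrow> greedy6 m (fq l # L)"

end

theory Submission
  imports Defs "HOL-Library.Multiset"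
begin


fun Q :: "nat \<Rightarrow> nat" where
  "Q n = (if n \<le> 5 then n else Q (n - 2) + Q (n - 3))"
declare Q.simps[simp del]

lemma Q_small: "n \<le> 5 \<Longrightarrow> Q n = n" by (simp add: Q.simps)
lemma Q_vals[simp]: "Q 0 = 0" "Q 1 = 1" "Q 2 = 2" "Q 3 = 3" "Q 4 = 4" "Q 5 = 5"
  "Q 6 = 7" "Q 7 = 9" "Q 8 = 12" "Q 9 = 16" "Q 10 = 21" "Q 11 = 28" "Q 12 = 37"
  by (simp_all add: Q.simps)

lemma Q_Suc0[simp]: "Q (Suc 0) = 1" by (simp add: Q.simps)
lemma Q_Suc1[simp]: "Q (Suc (Suc 0)) = 2" by (simp add: Q.simps)

lemma rec1: "Q (n + 5) = Q (n + 3) + Q (n + 2)"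
proof (cases n)
  case 0 then show ?thesis by (simp add: Q_small)
next
  case (Suc k)
  have "Q (n + 5) = Q (n + 5 - 2) + Q (n + 5 - 3)" by (subst Q.simps) (simp add: Suc)
  moreover have "n + 5 - 2 = n + 3" "n + 5 - 3 = n + 2" by simp_all
  ultimately show ?thesis by simp
qed


lemma rec2: "Q (n + 7) = Q (n + 6) + Q (n + 2)"
proof -
  have "Q (n + 7) = Q (n + 5) + Q (n + 4)" using rec1[of "n+2"] by (simp only: add.assoc numeral_plus_numeral semiring_norm)
  moreover have "Q (n + 6) = Q (n + 4) + Q (n + 3)" using rec1[of "n+1"] by (simp only: add.assoc numeral_plus_numeral semiring_norm one_plus_numeral)
  moreover have "Q (n + 5) = Q (n + 3) + Q (n + 2)" by (rule rec1)
  ultimately show ?thesis by simp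
qed

lemma Q_pos: "n \<ge> 1 \<Longrightarrow> Q n > 0"
proof (induction n rule: less_induct)
  case (less n)
  show ?case
  proof (cases "n \<le> 5")
    case True then show ?thesis using less.prems by (simp add: Q_small)
  next
    case False
    define t where "t = n - 5"
    have t: "n = t + 5" using False t_def by simp
    have "Q n = Q (t + 3) + Q (t + 2)" using rec1[of t] t by simp
    moreover have "Q (t + 3) > 0" using less.IH[of "t+3"] t by simp
    ultimately show ?thesis by simp
  qed
qed

lemma Q_Suc_gt: "Q n < Q (Suc n)"
proof (cases "n \<le> 5")
  case True
  then show ?thesis by (cases "n = 5") (auto simp: Q_small)
next
  case False
  define t where "t = n - 6"
  have t: "n = t + 6" using False t_def by simp
  have "Q (Suc n) = Q n + Q (t + 2)" using rec2[of t] t by (simp add: ac_simps)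
  moreover have "Q (t+2) > 0" by (rule Q_pos) simp
  ultimately show ?thesis by simp
qed

lemma Q_strict_mono: "strict_mono Q"
  by (simp add: strict_mono_Suc_iff Q_Suc_gt)

lemma Q_less_iff[simp]: "Q i < Q j \<longleftrightarrow> i < j"
  using Q_strict_mono by (simp add: strict_mono_less)
lemma Q_le_iff[simp]: "Q i \<le> Q j \<longleftrightarrow> i \<le> j"
  using Q_strict_mono by (simp add: strict_mono_less_eq)
lemma Q_inj[simp]: "Q i = Q j \<longleftrightarrow> i = j"
  using Q_strict_mono by (meson strict_mono_eq)

lemma Q_ge: "n \<le> Q n"
  by (induction n) (auto simp: Suc_le_eq intro: le_less_trans Q_Suc_gt)

definition leg :: "nat set \<Rightarrow> bool" where
  "leg S \<longleftrightarrow> finite S \<and> 0 \<notin> S \<and> (\<forall>i\<in>S. Suc i \<notin> S \<and> i + 3 \<notin> S \<and> i + 4 \<notin> S) \<and> \<not> (1 \<in> S \<and> 3 \<in> S)"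

lemma FQ_legal_leg: "FQ_legal S \<longleftrightarrow> leg S"
proof
  assume "FQ_legal S"
  then have H: "finite S" "0 \<notin> S" "\<not> {1, 3} \<subseteq> S"
    and D: "\<And>i j. i\<in>S \<Longrightarrow> j\<in>S \<Longrightarrow> (if i \<le> j then j - i else i - j) \<notin> {1,3,4}"
    unfolding FQ_legal_def by blast+
  have "Suc i \<notin> S \<and> i + 3 \<notin> S \<and> i + 4 \<notin> S" if "i\<in>S" for i
    using D[of i "Suc i"] D[of i "i+3"] D[of i "i+4"] that by auto
  then show "leg S" using H unfolding leg_def by auto
next
  assume L: "leg S"
  have "(if i \<le> j then j - i else i - j) \<notin> {1, 3, 4}" if "i \<in> S" "j \<in> S" for i j
  proof (cases "i \<le> j")
    case True
    then have "j = i + (j - i)" by simp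
    then show ?thesis using L that True unfolding leg_def
      by (metis Suc_eq_plus1 empty_iff insert_iff)
  next
    case False
    then have "i = j + (i - j)" by simp
    then show ?thesis using L that False unfolding leg_def
      by (metis Suc_eq_plus1 empty_iff insert_iff)
  qed
  then show "FQ_legal S" using L unfolding FQ_legal_def leg_def by blast
qed

lemma leg_subset: "leg S \<Longrightarrow> T \<subseteq> S \<Longrightarrow> leg T"
  unfolding leg_def by (auto intro: finite_subset)

lemma small_B0: assumes "leg S" "S \<subseteq> {1..0}" shows "sum Q S \<noteq> 1"
proof -
  have e: "{1..0::nat} = {}" by auto
  have sumS: "sum Q S = (\<Sum>i\<in>{}. if i \<in> S then Q i else 0)"
  proof -
    have "sum Q S = sum Q ({1..0} \<inter> S)" using assms(2) by (simp add: Int_absorb1)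
    also have "\<dots> = (\<Sum>i\<in>{1..0}. if i \<in> S then Q i else 0)" by (rule sum.inter_restrict) simp
    finally show ?thesis unfolding e .
  qed
  show ?thesis unfolding sumS by simp
qed

lemma small_B1: assumes "leg S" "S \<subseteq> {1..1}" shows "sum Q S \<noteq> 2"
proof -
  have e: "{1..1::nat} = {1}" by auto
  have sumS: "sum Q S = (\<Sum>i\<in>{1}. if i \<in> S then Q i else 0)"
  proof -
    have "sum Q S = sum Q ({1..1} \<inter> S)" using assms(2) by (simp add: Int_absorb1)
    also have "\<dots> = (\<Sum>i\<in>{1..1}. if i \<in> S then Q i else 0)" by (rule sum.inter_restrict) simp
    finally show ?thesis unfolding e .
  qed
  show ?thesis unfolding sumS by (cases "1 \<in> S"; simp)
qed

lemma small_B2: assumes "leg S" "S \<subseteq> {1..2}" shows "sum Q S \<noteq> 3"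
proof -
  have e: "{1..2::nat} = {1,2}" by auto
  have sumS: "sum Q S = (\<Sum>i\<in>{1,2}. if i \<in> S then Q i else 0)"
  proof -
    have "sum Q S = sum Q ({1..2} \<inter> S)" using assms(2) by (simp add: Int_absorb1)
    also have "\<dots> = (\<Sum>i\<in>{1..2}. if i \<in> S then Q i else 0)" by (rule sum.inter_restrict) simp
    finally show ?thesis unfolding e .
  qed
  have c: "1 \<in> S \<Longrightarrow> 2 \<notin> S"
    using assms(1) unfolding leg_def by (auto simp: numeral_eq_Suc)
  show ?thesis unfolding sumS by (cases "1 \<in> S"; cases "2 \<in> S"; simp add: c)
qed

lemma small_B3: assumes "leg S" "S \<subseteq> {1..3}" shows "sum Q S \<noteq> 4"
proof -
  have e: "{1..3::nat} = {1,2,3}" by auto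
  have sumS: "sum Q S = (\<Sum>i\<in>{1,2,3}. if i \<in> S then Q i else 0)"
  proof -
    have "sum Q S = sum Q ({1..3} \<inter> S)" using assms(2) by (simp add: Int_absorb1)
    also have "\<dots> = (\<Sum>i\<in>{1..3}. if i \<in> S then Q i else 0)" by (rule sum.inter_restrict) simp
    finally show ?thesis unfolding e .
  qed
  have c: "1 \<in> S \<Longrightarrow> 2 \<notin> S" "2 \<in> S \<Longrightarrow> 3 \<notin> S" "1 \<in> S \<Longrightarrow> 3 \<notin> S"
    using assms(1) unfolding leg_def by (auto simp: numeral_eq_Suc)
  show ?thesis unfolding sumS by (cases "1 \<in> S"; cases "2 \<in> S"; cases "3 \<in> S"; simp add: c)
qed

lemma small_B4: assumes "leg S" "S \<subseteq> {1..4}" shows "sum Q S \<noteq> 5"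
proof -
  have e: "{1..4::nat} = {1,2,3,4}" by auto
  have sumS: "sum Q S = (\<Sum>i\<in>{1,2,3,4}. if i \<in> S then Q i else 0)"
  proof -
    have "sum Q S = sum Q ({1..4} \<inter> S)" using assms(2) by (simp add: Int_absorb1)
    also have "\<dots> = (\<Sum>i\<in>{1..4}. if i \<in> S then Q i else 0)" by (rule sum.inter_restrict) simp
    finally show ?thesis unfolding e .
  qed
  have c: "1 \<in> S \<Longrightarrow> 2 \<notin> S" "1 \<in> S \<Longrightarrow> 4 \<notin> S" "2 \<in> S \<Longrightarrow> 3 \<notin> S" "3 \<in> S \<Longrightarrow> 4 \<notin> S" "1 \<in> S \<Longrightarrow> 3 \<notin> S"
    using assms(1) unfolding leg_def by (auto simp: numeral_eq_Suc)
  show ?thesis unfolding sumS by (cases "1 \<in> S"; cases "2 \<in> S"; cases "3 \<in> S"; cases "4 \<in> S"; simp add: c)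
qed

lemma small_B5: assumes "leg S" "S \<subseteq> {1..5}" shows "sum Q S \<noteq> 7"
proof -
  have e: "{1..5::nat} = {1,2,3,4,5}" by auto
  have sumS: "sum Q S = (\<Sum>i\<in>{1,2,3,4,5}. if i \<in> S then Q i else 0)"
  proof -
    have "sum Q S = sum Q ({1..5} \<inter> S)" using assms(2) by (simp add: Int_absorb1)
    also have "\<dots> = (\<Sum>i\<in>{1..5}. if i \<in> S then Q i else 0)" by (rule sum.inter_restrict) simp
    finally show ?thesis unfolding e .
  qed
  have c: "1 \<in> S \<Longrightarrow> 2 \<notin> S" "1 \<in> S \<Longrightarrow> 4 \<notin> S" "1 \<in> S \<Longrightarrow> 5 \<notin> S" "2 \<in> S \<Longrightarrow> 3 \<notin> S" "2 \<in> S \<Longrightarrow> 5 \<notin> S" "3 \<in> S \<Longrightarrow> 4 \<notin> S" "4 \<in> S \<Longrightarrow> 5 \<notin> S" "1 \<in> S \<Longrightarrow> 3 \<notin> S"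
    using assms(1) unfolding leg_def by (auto simp: numeral_eq_Suc)
  show ?thesis unfolding sumS by (cases "1 \<in> S"; cases "2 \<in> S"; cases "3 \<in> S"; cases "4 \<in> S"; cases "5 \<in> S"; simp add: c)
qed

lemma small_B6: assumes "leg S" "S \<subseteq> {1..6}" shows "sum Q S \<noteq> 9"
proof -
  have e: "{1..6::nat} = {1,2,3,4,5,6}" by auto
  have sumS: "sum Q S = (\<Sum>i\<in>{1,2,3,4,5,6}. if i \<in> S then Q i else 0)"
  proof -
    have "sum Q S = sum Q ({1..6} \<inter> S)" using assms(2) by (simp add: Int_absorb1)
    also have "\<dots> = (\<Sum>i\<in>{1..6}. if i \<in> S then Q i else 0)" by (rule sum.inter_restrict) simp
    finally show ?thesis unfolding e .
  qed
  have c: "1 \<in> S \<Longrightarrow> 2 \<notin> S" "1 \<in> S \<Longrightarrow> 4 \<notin> S" "1 \<in> S \<Longrightarrow> 5 \<notin> S" "2 \<in> S \<Longrightarrow> 3 \<notin> S" "2 \<in> S \<Longrightarrow> 5 \<notin> S" "2 \<in> S \<Longrightarrow> 6 \<notin> S" "3 \<in> S \<Longrightarrow> 4 \<notin> S" "3 \<in> S \<Longrightarrow> 6 \<notin> S" "4 \<in> S \<Longrightarrow> 5 \<notin> S" "5 \<in> S \<Longrightarrow> 6 \<notin> S" "1 \<in> S \<Longrightarrow> 3 \<notin> S"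
    using assms(1) unfolding leg_def by (auto simp: numeral_eq_Suc)
  show ?thesis unfolding sumS by (cases "1 \<in> S"; cases "2 \<in> S"; cases "3 \<in> S"; cases "4 \<in> S"; cases "5 \<in> S"; cases "6 \<in> S"; simp add: c)
qed

lemma small_B7: assumes "leg S" "S \<subseteq> {1..7}" shows "sum Q S \<noteq> 12"
proof -
  have e: "{1..7::nat} = {1,2,3,4,5,6,7}" by auto
  have sumS: "sum Q S = (\<Sum>i\<in>{1,2,3,4,5,6,7}. if i \<in> S then Q i else 0)"
  proof -
    have "sum Q S = sum Q ({1..7} \<inter> S)" using assms(2) by (simp add: Int_absorb1)
    also have "\<dots> = (\<Sum>i\<in>{1..7}. if i \<in> S then Q i else 0)" by (rule sum.inter_restrict) simp
    finally show ?thesis unfolding e .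
  qed
  have c: "1 \<in> S \<Longrightarrow> 2 \<notin> S" "1 \<in> S \<Longrightarrow> 4 \<notin> S" "1 \<in> S \<Longrightarrow> 5 \<notin> S" "2 \<in> S \<Longrightarrow> 3 \<notin> S" "2 \<in> S \<Longrightarrow> 5 \<notin> S" "2 \<in> S \<Longrightarrow> 6 \<notin> S" "3 \<in> S \<Longrightarrow> 4 \<notin> S" "3 \<in> S \<Longrightarrow> 6 \<notin> S" "3 \<in> S \<Longrightarrow> 7 \<notin> S" "4 \<in> S \<Longrightarrow> 5 \<notin> S" "4 \<in> S \<Longrightarrow> 7 \<notin> S" "5 \<in> S \<Longrightarrow> 6 \<notin> S" "6 \<in> S \<Longrightarrow> 7 \<notin> S" "1 \<in> S \<Longrightarrow> 3 \<notin> S"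
    using assms(1) unfolding leg_def by (auto simp: numeral_eq_Suc)
  show ?thesis unfolding sumS by (cases "1 \<in> S"; cases "2 \<in> S"; cases "3 \<in> S"; cases "4 \<in> S"; cases "5 \<in> S"; cases "6 \<in> S"; cases "7 \<in> S"; simp add: c)
qed

lemma small_B8: assumes "leg S" "S \<subseteq> {1..8}" shows "sum Q S \<noteq> 16"
proof -
  have e: "{1..8::nat} = {1,2,3,4,5,6,7,8}" by auto
  have sumS: "sum Q S = (\<Sum>i\<in>{1,2,3,4,5,6,7,8}. if i \<in> S then Q i else 0)"
  proof -
    have "sum Q S = sum Q ({1..8} \<inter> S)" using assms(2) by (simp add: Int_absorb1)
    also have "\<dots> = (\<Sum>i\<in>{1..8}. if i \<in> S then Q i else 0)" by (rule sum.inter_restrict) simp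
    finally show ?thesis unfolding e .
  qed
  have c: "1 \<in> S \<Longrightarrow> 2 \<notin> S" "1 \<in> S \<Longrightarrow> 4 \<notin> S" "1 \<in> S \<Longrightarrow> 5 \<notin> S" "2 \<in> S \<Longrightarrow> 3 \<notin> S" "2 \<in> S \<Longrightarrow> 5 \<notin> S" "2 \<in> S \<Longrightarrow> 6 \<notin> S" "3 \<in> S \<Longrightarrow> 4 \<notin> S" "3 \<in> S \<Longrightarrow> 6 \<notin> S" "3 \<in> S \<Longrightarrow> 7 \<notin> S" "4 \<in> S \<Longrightarrow> 5 \<notin> S" "4 \<in> S \<Longrightarrow> 7 \<notin> S" "4 \<in> S \<Longrightarrow> 8 \<notin> S" "5 \<in> S \<Longrightarrow> 6 \<notin> S" "5 \<in> S \<Longrightarrow> 8 \<notin> S" "6 \<in> S \<Longrightarrow> 7 \<notin> S" "7 \<in> S \<Longrightarrow> 8 \<notin> S" "1 \<in> S \<Longrightarrow> 3 \<notin> S"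
    using assms(1) unfolding leg_def by (auto simp: numeral_eq_Suc)
  show ?thesis unfolding sumS by (cases "1 \<in> S"; cases "2 \<in> S"; cases "3 \<in> S"; cases "4 \<in> S"; cases "5 \<in> S"; cases "6 \<in> S"; cases "7 \<in> S"; cases "8 \<in> S"; simp add: c)
qed

lemma small_B: assumes "leg S" "S \<subseteq> {1..n}" "n \<le> 8" shows "sum Q S \<noteq> Q (Suc n)"
proof -
  have "n = 0 \<or> n = 1 \<or> n = 2 \<or> n = 3 \<or> n = 4 \<or> n = 5 \<or> n = 6 \<or> n = 7 \<or> n = 8" using assms(3) by linarith
  then show ?thesis
  proof (elim disjE)
    assume "n = 0" then show ?thesis using small_B0[of S] assms by simp
  next
    assume "n = 1" then show ?thesis using small_B1[of S] assms by simp
  next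
    assume "n = 2" then show ?thesis using small_B2[of S] assms by simp
  next
    assume "n = 3" then show ?thesis using small_B3[of S] assms by simp
  next
    assume "n = 4" then show ?thesis using small_B4[of S] assms by simp
  next
    assume "n = 5" then show ?thesis using small_B5[of S] assms by simp
  next
    assume "n = 6" then show ?thesis using small_B6[of S] assms by simp
  next
    assume "n = 7" then show ?thesis using small_B7[of S] assms by simp
  next
    assume "n = 8" then show ?thesis using small_B8[of S] assms by simp
  qed
qed

lemma bound: "finite S \<Longrightarrow> S \<subseteq> {1..j} \<Longrightarrow> (\<forall>i\<in>S. Suc i \<notin> S) \<Longrightarrow> sum Q S < Q (j + 3)"
proof (induction j arbitrary: S rule: less_induct)
  case (less j)
  show ?case
  proof (cases "j \<le> 1")
    case True
    then have "S \<subseteq> {1}" using less.prems(2) by auto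
    then have "sum Q S \<le> sum Q {1}" by (intro sum_mono2) auto
    moreover have "Q 3 \<le> Q (j+3)" by (subst Q_le_iff) simp
    ultimately show ?thesis by simp
  next
    case False
    define t where "t = j - 2"
    have jt: "j = t + 2" using False t_def by simp
    show ?thesis
    proof (cases "j \<in> S")
      case False
      have sub: "S \<subseteq> {1..j-1}"
      proof
        fix x assume x: "x \<in> S"
        then have "1 \<le> x" "x \<le> j" "x \<noteq> j" using less.prems(2) False by auto
        then show "x \<in> {1..j-1}" by simp
      qed
      have "sum Q S < Q (j - 1 + 3)" using less.IH[of "j-1" S] less.prems sub jt by simp
      moreover have "Q (j-1+3) \<le> Q (j+3)" by simp
      ultimately show ?thesis by linarith
    next
      case True
      have sub: "S - {j} \<subseteq> {1..t}"
      proof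
        fix x assume x: "x \<in> S - {j}"
        then have "x \<in> {1..j}" "x \<noteq> j" using less.prems(2) by auto
        moreover have "Suc x \<noteq> j" using less.prems(3) x True by auto
        ultimately show "x \<in> {1..t}" using jt by auto
      qed
      have "sum Q (S - {j}) < Q (t + 3)"
        using less.IH[of t "S - {j}"] less.prems sub jt by auto
      moreover have "sum Q S = Q j + sum Q (S - {j})" using less.prems(1) True by (simp add: sum.remove)
      moreover have "Q (j+3) = Q (t+3) + Q j" using rec1[of t] jt by (simp add: ac_simps)
      ultimately show ?thesis by linarith
    qed
  qed
qed

lemma mem_le_sum: "finite A \<Longrightarrow> x \<in> A \<Longrightarrow> Q x \<le> sum Q A"
  by (simp add: member_le_sum)

lemma noB: "leg S \<Longrightarrow> S \<subseteq> {1..n} \<Longrightarrow> sum Q S \<noteq> Q (Suc n)"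
proof (induction n arbitrary: S rule: less_induct)
  case (less n)
  show ?case
  proof (cases "n \<le> 8")
    case True thus ?thesis using small_B less.prems by blast
  next
    case False
    define t where "t = n - 9"
    have nt: "n = t + 9" using False t_def by simp
    have fin: "finite S" using less.prems(1) unfolding leg_def by simp
    have nd: "\<And>i. i \<in> S \<Longrightarrow> Suc i \<notin> S \<and> i + 3 \<notin> S \<and> i + 4 \<notin> S"
      using less.prems(1) unfolding leg_def by blast
    have sub: "\<And>x. x \<in> S \<Longrightarrow> 1 \<le> x \<and> x \<le> n" using less.prems(2) by auto
    show ?thesis
    proof
      assume sumeq: "sum Q S = Q (Suc n)"
      consider "n \<in> S" | "n \<notin> S" "t + 8 \<in> S" | "n \<notin> S" "t + 8 \<notin> S" by blast
      then show False
      proof cases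
        case 1
        have e1: "Q (Suc n) = Q n + Q (t + 5)" using rec2[of "t+3"] nt by (simp add: ac_simps)
        have "sum Q S = Q n + sum Q (S - {n})" using fin 1 by (simp add: sum.remove)
        then have s': "sum Q (S - {n}) = Q (t + 5)" using sumeq e1 by simp
        show False
        proof (cases "t + 7 \<in> S - {n}")
          case True
          then have "Q (t+7) \<le> sum Q (S - {n})" using fin by (intro mem_le_sum) auto
          then show False using s' by simp
        next
          case False
          have sub': "S - {n} \<subseteq> {1..t+4}"
          proof
            fix x assume x: "x \<in> S - {n}"
            then have "1 \<le> x" "x \<le> n" "x \<noteq> n" using sub by auto
            moreover have "Suc x \<noteq> n" "x + 3 \<noteq> n" "x + 4 \<noteq> n" using nd[of x] x 1 by auto
            moreover have "x \<noteq> t + 7" using False x by auto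
            ultimately show "x \<in> {1..t+4}" using nt by auto
          qed
          have "leg (S - {n})" by (rule leg_subset[OF less.prems(1)]) auto
          then have "sum Q (S - {n}) \<noteq> Q (Suc (t+4))"
            by (intro less.IH) (use nt sub' in auto)
          then show False using s' by (simp add: ac_simps)
        qed
      next
        case 2
        have e1: "Q (Suc n) = Q (t + 8) + Q (t + 7)" using rec1[of "t+5"] nt by (simp add: ac_simps)
        have "sum Q S = Q (t+8) + sum Q (S - {t+8})" using fin 2 by (simp add: sum.remove)
        then have s': "sum Q (S - {t+8}) = Q (t + 7)" using sumeq e1 by simp
        have sub': "\<And>x. x \<in> S - {t+8} \<Longrightarrow> 1 \<le> x \<and> x \<le> t + 6 \<and> x \<noteq> t + 5 \<and> x \<noteq> t + 4"
        proof -
          fix x assume x: "x \<in> S - {t+8}"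
          then have "1 \<le> x" "x \<le> n" "x \<noteq> t + 8" using sub by auto
          moreover have "x \<noteq> n" using 2 x by auto
          moreover have "Suc x \<noteq> t + 8" "x + 3 \<noteq> t + 8" "x + 4 \<noteq> t + 8" using nd[of x] x 2 by (auto simp: add.commute)
          ultimately show "1 \<le> x \<and> x \<le> t + 6 \<and> x \<noteq> t + 5 \<and> x \<noteq> t + 4" using nt by auto
        qed
        show False
        proof (cases "t + 6 \<in> S")
          case True
          let ?S = "S - {t+8} - {t+6}"
          have "sum Q (S - {t+8}) = Q (t+6) + sum Q ?S" using fin True by (simp add: sum.remove)
          moreover have "Q (t+7) = Q (t+6) + Q (t+2)" using rec2[of t] by simp
          ultimately have s'': "sum Q ?S = Q (t+2)" using s' by simp
          have sub'': "?S \<subseteq> {1..t+1}"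
          proof
            fix x assume x: "x \<in> ?S"
            then have "1 \<le> x" "x \<le> t + 6" "x \<noteq> t + 5" "x \<noteq> t + 4" "x \<noteq> t + 6" using sub'[of x] by auto
            moreover have "x + 3 \<noteq> t + 6" "x + 4 \<noteq> t + 6" using nd[of x] x True by (auto simp: add.commute)
            ultimately show "x \<in> {1..t+1}" by auto
          qed
          have "leg ?S" by (rule leg_subset[OF less.prems(1)]) auto
          then have "sum Q ?S \<noteq> Q (Suc (t+1))"
            by (intro less.IH) (use nt sub'' in auto)
          then show False using s'' by simp
        next
          case False
          have sub'': "S - {t+8} \<subseteq> {1..t+3}"
          proof
            fix x assume x: "x \<in> S - {t+8}"
            have "x \<noteq> t + 6" using x False by auto
            then show "x \<in> {1..t+3}" using sub'[of x] x by auto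
          qed
          have "sum Q (S - {t+8}) < Q (t + 3 + 3)"
            by (rule bound) (use fin sub'' nd in auto)
          moreover have "Q (t+3+3) < Q (t+7)" by simp
          ultimately show False using s' by linarith
        qed
      next
        case 3
        have sub': "S \<subseteq> {1..t+7}"
        proof
          fix x assume x: "x \<in> S"

          have "x \<noteq> t + 8" "x \<noteq> t + 9" using 3 x nt by auto
          then show "x \<in> {1..t+7}" using sub[OF x] nt by auto
        qed
        have "sum Q S < Q (t + 7 + 3)"
          by (rule bound) (use fin sub' nd in auto)
        then show False using sumeq nt by (simp add: ac_simps)
      qed
    qed
  qed
qed

lemma greatest: "1 \<le> x \<Longrightarrow> \<exists>k. 1 \<le> k \<and> Q k \<le> x \<and> x < Q (Suc k)"
proof -
  assume x: "1 \<le> x"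
  have "\<exists>N. x < Q N" using Q_ge[of "Suc x"] by (intro exI[of _ "Suc x"]) simp
  define N where "N = (LEAST N. x < Q N)"
  have N1: "x < Q N" unfolding N_def using \<open>\<exists>N. x < Q N\<close> by (rule LeastI_ex)
  have N2: "\<And>M. M < N \<Longrightarrow> \<not> x < Q M" unfolding N_def by (rule not_less_Least)
  note N = N1 N2
  have "N \<noteq> 0" using N(1) by (cases N) auto
  then obtain k where k: "N = Suc k" by (cases N) auto
  have "Q k \<le> x" using N(2)[of k] k by simp
  moreover have "k \<noteq> 0" using N(1) k x by (cases k) auto
  ultimately show ?thesis using N(1) k by (intro exI[of _ k]) auto
qed

lemma exA: "0 < x \<Longrightarrow> x < Q (Suc n) \<Longrightarrow> \<exists>S. S \<subseteq> {1..n} \<and> leg S \<and> sum Q S = x"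
proof (induction x arbitrary: n rule: less_induct)
  case (less x)
  show ?case
  proof (cases "x \<le> 5")
    case True
    have "x \<le> n"
    proof (rule ccontr)
      assume "\<not> x \<le> n"
      then have "Q (Suc n) \<le> Q x" by simp
      then show False using less.prems True Q_small[of x] by simp
    qed
    moreover have "leg {x}" using less.prems unfolding leg_def by auto
    ultimately show ?thesis using less.prems True Q_small[of x] by (intro exI[of _ "{x}"]) auto
  next
    case F: False
    show ?thesis
    proof (cases "x = 6")
      case True
      have "5 \<le> n"
      proof (rule ccontr)
        assume "\<not> 5 \<le> n"
        then have "Suc n \<le> 5" by simp
        then have "Q (Suc n) \<le> Q 5" by (simp only: Q_le_iff)
        then show False using less.prems True by simp
      qed
      moreover have "leg {2,4}" unfolding leg_def by auto
      ultimately show ?thesis using True by (intro exI[of _ "{2,4}"]) auto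
    next
      case False
      obtain k where k: "1 \<le> k" "Q k \<le> x" "x < Q (Suc k)" using greatest[of x] less.prems by auto
      have k6: "6 \<le> k"
      proof (rule ccontr)
        assume "\<not> 6 \<le> k"
        then have "Suc k \<le> 6" by simp
        then have "Q (Suc k) \<le> Q 6" by (simp only: Q_le_iff)
        then show False using k F False by simp
      qed
      have kn: "k \<le> n" using k(2) less.prems(2) by (metis Q_less_iff le_less_trans less_Suc_eq_le)
      define t where "t = k - 6"
      have kt: "k = t + 6" using k6 t_def by simp
      have eQ: "Q (Suc k) = Q k + Q (t + 2)" using rec2[of t] kt by (simp add: ac_simps)
      define r where "r = x - Q k"
      have rlt: "r < Q (Suc (t+1))" using k eQ r_def by simp
      show ?thesis
      proof (cases "r = 0")
        case True
        then have "x = Q k" using k r_def by simp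
        moreover have "leg {k}" using k6 unfolding leg_def by auto
        ultimately show ?thesis using kn k6 by (intro exI[of _ "{k}"]) auto
      next
        case False
        have "r < x" using r_def Q_pos[of k] k by simp
        then obtain S' where S': "S' \<subseteq> {1..t+1}" "leg S'" "sum Q S' = r"
          using less.IH[of r "t+1"] False rlt by auto
        have kS': "k \<notin> S'" using S'(1) kt by auto
        have "leg (insert k S')"
          using S' kt unfolding leg_def by (auto; fastforce)
        moreover have "sum Q (insert k S') = x"
          using S' kS' r_def k unfolding leg_def by simp
        moreover have "insert k S' \<subseteq> {1..n}" using S'(1) kn kt by auto
        ultimately show ?thesis by blast
      qed
    qed
  qed
qed

lemma has_iff: "has_FQ_legal (map Q [1..<Suc n]) x \<longleftrightarrow> (\<exists>S. S \<subseteq> {1..n} \<and> leg S \<and> sum Q S = x)"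
proof -
  have cong: "(\<Sum>i\<in>S. map Q [1..<Suc n] ! (i - 1)) = sum Q S" if "S \<subseteq> {1..n}" for S
  proof (rule sum.cong)
    fix i assume "i \<in> S"
    then have "1 \<le> i" "i \<le> n" using that by auto
    then show "map Q [1..<Suc n] ! (i - 1) = Q i" by (simp add: nth_map del: upt_Suc)
  qed simp
  have len: "length (map Q [1..<Suc n]) = n" by (simp del: upt_Suc)
  show ?thesis unfolding has_FQ_legal_def FQ_legal_leg len
  proof
    assume "\<exists>S\<subseteq>{1..n}. leg S \<and> (\<Sum>i\<in>S. map Q [1..<Suc n] ! (i - 1)) = x"
    then obtain S where S: "S \<subseteq> {1..n}" "leg S" "(\<Sum>i\<in>S. map Q [1..<Suc n] ! (i - 1)) = x" by blast
    have "sum Q S = x" using S(3) cong[OF S(1)] by metis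
    then show "\<exists>S. S \<subseteq> {1..n} \<and> leg S \<and> sum Q S = x" using S by blast
  next
    assume "\<exists>S. S \<subseteq> {1..n} \<and> leg S \<and> sum Q S = x"
    then obtain S where S: "S \<subseteq> {1..n}" "leg S" "sum Q S = x" by blast
    have "(\<Sum>i\<in>S. map Q [1..<Suc n] ! (i - 1)) = x" using S(3) cong[OF S(1)] by metis
    then show "\<exists>S\<subseteq>{1..n}. leg S \<and> (\<Sum>i\<in>S. map Q [1..<Suc n] ! (i - 1)) = x" using S by blast
  qed
qed

lemma prefix: "FQ_prefix n = map Q [1..<Suc n]"
proof (induction n)
  case 0 then show ?case by simp
next
  case (Suc n)
  have "(LEAST x::nat. 0 < x \<and> \<not> has_FQ_legal (map Q [1..<Suc n]) x) = Q (Suc n)"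
  proof (rule Least_equality)
    show "0 < Q (Suc n) \<and> \<not> has_FQ_legal (map Q [1..<Suc n]) (Q (Suc n))"
      unfolding has_iff using Q_pos[of "Suc n"] noB[of _ n] by auto
  next
    fix y assume y: "0 < y \<and> \<not> has_FQ_legal (map Q [1..<Suc n]) y"
    show "Q (Suc n) \<le> y"
    proof (rule ccontr)
      assume "\<not> Q (Suc n) \<le> y"
      then show False using exA[of y n] y unfolding has_iff by auto
    qed
  qed
  then show ?case using Suc by simp
qed

lemma fq_Q: "1 \<le> i \<Longrightarrow> fq i = Q i"
  unfolding fq_def prefix by (simp add: nth_map del: upt_Suc)



definition sQ :: "nat multiset \<Rightarrow> nat" where "sQ D = sum_mset (image_mset Q D)"

lemma sQ_simps[simp]: "sQ {#} = 0" "sQ (add_mset a D) = Q a + sQ D" "sQ (A + B) = sQ A + sQ B"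
  by (simp_all add: sQ_def)

lemma mem_le_sQ: "a \<in># D \<Longrightarrow> Q a \<le> sQ D"
  by (metis le_add1 multi_member_split sQ_simps(2))

lemma sQ_zero: "(\<forall>i\<in>#D. i = 0) \<Longrightarrow> sQ D = 0"
  by (induction D) auto

lemma sQ_pos: "0 < sQ D \<Longrightarrow> \<exists>i\<in>#D. 1 \<le> i"
  using sQ_zero by (metis less_one not_le neq0_conv)

lemma pair_small: assumes "1 \<le> j" "j \<le> k" "k \<le> j + 4" "\<not> (k = 5 \<and> j = 1)" "k \<le> 9"
  shows "\<exists>a b. k < a \<and> Q k + Q j = Q a + Q b"
proof -
  have "k = 1 \<or> k = 2 \<or> k = 3 \<or> k = 4 \<or> k = 5 \<or> k = 6 \<or> k = 7 \<or> k = 8 \<or> k = 9" using assms(1,2,5) by linarith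
  then show ?thesis
  proof (elim disjE)
    assume k: "k = 1"
    have "j = 1" using assms k by linarith
    then show ?thesis using k by (intro exI[of _ 2] exI[of _ 0]) simp
  next
    assume k: "k = 2"
    have "j = 1 \<or> j = 2" using assms k by linarith
    then show ?thesis
    proof (elim disjE)
      assume "j = 1" then show ?thesis using k by (intro exI[of _ 3] exI[of _ 0]) simp
    next
      assume "j = 2" then show ?thesis using k by (intro exI[of _ 3] exI[of _ 1]) simp
    qed
  next
    assume k: "k = 3"
    have "j = 1 \<or> j = 2 \<or> j = 3" using assms k by linarith
    then show ?thesis
    proof (elim disjE)
      assume "j = 1" then show ?thesis using k by (intro exI[of _ 4] exI[of _ 0]) simp
    next
      assume "j = 2" then show ?thesis using k by (intro exI[of _ 4] exI[of _ 1]) simp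
    next
      assume "j = 3" then show ?thesis using k by (intro exI[of _ 4] exI[of _ 2]) simp
    qed
  next
    assume k: "k = 4"
    have "j = 1 \<or> j = 2 \<or> j = 3 \<or> j = 4" using assms k by linarith
    then show ?thesis
    proof (elim disjE)
      assume "j = 1" then show ?thesis using k by (intro exI[of _ 5] exI[of _ 0]) simp
    next
      assume "j = 2" then show ?thesis using k by (intro exI[of _ 5] exI[of _ 1]) simp
    next
      assume "j = 3" then show ?thesis using k by (intro exI[of _ 5] exI[of _ 2]) simp
    next
      assume "j = 4" then show ?thesis using k by (intro exI[of _ 5] exI[of _ 3]) simp
    qed
  next
    assume k: "k = 5"
    have "j \<noteq> 1" using assms(4) k by simp
    then have "j = 2 \<or> j = 3 \<or> j = 4 \<or> j = 5" using assms k by linarith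
    then show ?thesis
    proof (elim disjE)
      assume "j = 2" then show ?thesis using k by (intro exI[of _ 6] exI[of _ 0]) simp
    next
      assume "j = 3" then show ?thesis using k by (intro exI[of _ 6] exI[of _ 1]) simp
    next
      assume "j = 4" then show ?thesis using k by (intro exI[of _ 6] exI[of _ 2]) simp
    next
      assume "j = 5" then show ?thesis using k by (intro exI[of _ 6] exI[of _ 3]) simp
    qed
  next
    assume k: "k = 6"
    have "j = 2 \<or> j = 3 \<or> j = 4 \<or> j = 5 \<or> j = 6" using assms k by linarith
    then show ?thesis
    proof (elim disjE)
      assume "j = 2" then show ?thesis using k by (intro exI[of _ 7] exI[of _ 0]) simp
    next
      assume "j = 3" then show ?thesis using k by (intro exI[of _ 7] exI[of _ 1]) simp
    next
      assume "j = 4" then show ?thesis using k by (intro exI[of _ 7] exI[of _ 2]) simp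
    next
      assume "j = 5" then show ?thesis using k by (intro exI[of _ 7] exI[of _ 3]) simp
    next
      assume "j = 6" then show ?thesis using k by (intro exI[of _ 7] exI[of _ 5]) simp
    qed
  next
    assume k: "k = 7"
    have "j = 3 \<or> j = 4 \<or> j = 5 \<or> j = 6 \<or> j = 7" using assms k by linarith
    then show ?thesis
    proof (elim disjE)
      assume "j = 3" then show ?thesis using k by (intro exI[of _ 8] exI[of _ 0]) simp
    next
      assume "j = 4" then show ?thesis using k by (intro exI[of _ 8] exI[of _ 1]) simp
    next
      assume "j = 5" then show ?thesis using k by (intro exI[of _ 8] exI[of _ 2]) simp
    next
      assume "j = 6" then show ?thesis using k by (intro exI[of _ 8] exI[of _ 4]) simp
    next
      assume "j = 7" then show ?thesis using k by (intro exI[of _ 9] exI[of _ 2]) simp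
    qed
  next
    assume k: "k = 8"
    have "j = 4 \<or> j = 5 \<or> j = 6 \<or> j = 7 \<or> j = 8" using assms k by linarith
    then show ?thesis
    proof (elim disjE)
      assume "j = 4" then show ?thesis using k by (intro exI[of _ 9] exI[of _ 0]) simp
    next
      assume "j = 5" then show ?thesis using k by (intro exI[of _ 9] exI[of _ 1]) simp
    next
      assume "j = 6" then show ?thesis using k by (intro exI[of _ 9] exI[of _ 3]) simp
    next
      assume "j = 7" then show ?thesis using k by (intro exI[of _ 9] exI[of _ 5]) simp
    next
      assume "j = 8" then show ?thesis using k by (intro exI[of _ 10] exI[of _ 3]) simp
    qed
  next
    assume k: "k = 9"
    have "j = 5 \<or> j = 6 \<or> j = 7 \<or> j = 8 \<or> j = 9" using assms k by linarith
    then show ?thesis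
    proof (elim disjE)
      assume "j = 5" then show ?thesis using k by (intro exI[of _ 10] exI[of _ 0]) simp
    next
      assume "j = 6" then show ?thesis using k by (intro exI[of _ 10] exI[of _ 2]) simp
    next
      assume "j = 7" then show ?thesis using k by (intro exI[of _ 10] exI[of _ 4]) simp
    next
      assume "j = 8" then show ?thesis using k by (intro exI[of _ 10] exI[of _ 6]) simp
    next
      assume "j = 9" then show ?thesis using k by (intro exI[of _ 11] exI[of _ 4]) simp
    qed
  qed
qed
lemma pair: assumes "1 \<le> j" "j \<le> k" "k \<le> j + 4" "\<not> (k = 5 \<and> j = 1)"
  shows "\<exists>a b. k < a \<and> Q k + Q j = Q a + Q b"
proof (cases "k \<le> 9")
  case True then show ?thesis using pair_small assms by blast
next
  case False
  define t where "t = k - 10"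
  have kt: "k = t + 10" using False t_def by simp
  have r1: "Q (t+12) = Q (t+10) + Q (t+9)" using rec1[of "t+7"] by (simp add: ac_simps)
  have r2: "Q (t+10) = Q (t+9) + Q (t+5)" using rec2[of "t+3"] by (simp add: ac_simps)
  have r3: "Q (t+11) = Q (t+10) + Q (t+6)" using rec2[of "t+4"] by (simp add: ac_simps)
  have r4: "Q (t+8) = Q (t+6) + Q (t+5)" using rec1[of "t+3"] by (simp add: ac_simps)
  have r5: "Q (t+7) = Q (t+6) + Q (t+2)" using rec2[of t] by (simp add: ac_simps)
  have "j = t + 10 \<or> j = t + 9 \<or> j = t + 8 \<or> j = t + 7 \<or> j = t + 6" using assms kt by linarith
  then show ?thesis
  proof (elim disjE)
    assume "j = t + 10" then show ?thesis using kt r1 r2 by (intro exI[of _ "t+12"] exI[of _ "t+5"]) simp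
  next
    assume "j = t + 9" then show ?thesis using kt r1 by (intro exI[of _ "t+12"] exI[of _ 0]) simp
  next
    assume "j = t + 8" then show ?thesis using kt r3 r4 by (intro exI[of _ "t+11"] exI[of _ "t+5"]) simp
  next
    assume "j = t + 7" then show ?thesis using kt r3 r5 by (intro exI[of _ "t+11"] exI[of _ "t+2"]) simp
  next
    assume "j = t + 6" then show ?thesis using kt r3 by (intro exI[of _ "t+11"] exI[of _ 0]) simp
  qed
qed

lemma pairstep:
  assumes "j \<in># G" "1 \<le> j" "j \<le> k" "k \<le> j + 4" "\<not> (k = 5 \<and> j = 1)"
  shows "\<exists>D'. sQ D' = Q k + sQ G \<and> size D' \<le> Suc (size G) \<and> (\<exists>i\<in>#D'. k < i)"
proof -
  obtain a b where ab: "k < a" "Q k + Q j = Q a + Q b" using pair assms(2-5) by blast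
  obtain H where H: "G = add_mset j H" using assms(1) by (metis multi_member_split)
  let ?D = "add_mset a (add_mset b H)"
  have "sQ ?D = Q k + sQ G" using ab H by simp
  moreover have "size ?D \<le> Suc (size G)" using H by simp
  ultimately show ?thesis using ab by (intro exI[of _ ?D]) auto
qed

lemma Lp: "(\<forall>i\<in>#D. i \<le> k) \<Longrightarrow> Q (Suc k) \<le> sQ D \<Longrightarrow>
   \<exists>D'. sQ D' = sQ D \<and> size D' \<le> size D \<and> (\<exists>i\<in>#D'. k < i)"
proof (induction k arbitrary: D rule: less_induct)
  case (less k)
  have inner: "\<exists>D'. sQ D' = sQ E \<and> size D' \<le> size E \<and> (\<exists>i\<in>#D'. k < i)"
    if E: "\<forall>i\<in>#E. i \<le> k" "k \<in># E" "Q (Suc k) \<le> sQ E" for E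
  proof -
    obtain F where F: "E = add_mset k F" using E(2) by (metis multi_member_split)
    have Fle: "\<forall>i\<in>#F. i \<le> k" using E(1) F by auto
    have sF: "Q (Suc k) \<le> Q k + sQ F" using E(3) F by simp
    have Fpos: "0 < sQ F" using sF Q_Suc_gt[of k] by linarith
    show ?thesis
    proof (cases "\<exists>j\<in>#F. 1 \<le> j \<and> k \<le> j + 4 \<and> \<not> (k = 5 \<and> j = 1)")
      case True
      then obtain j where j: "j \<in># F" "1 \<le> j" "k \<le> j + 4" "\<not> (k = 5 \<and> j = 1)" by blast
      then show ?thesis using pairstep[of j F k] Fle F by auto
    next
      case nj: False
      show ?thesis
      proof (cases "k = 5")
        case True
        have one: "\<forall>i\<in>#F. 1 \<le> i \<longrightarrow> i = 1" using nj True by auto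
        have s2: "2 \<le> sQ F" using sF True by simp
        obtain i1 where i1: "i1 \<in># F" "1 \<le> i1" using sQ_pos Fpos by blast
        then have "i1 = 1" using one by auto
        then obtain F1 where F1: "F = add_mset 1 F1" using i1 by (metis multi_member_split)
        then have "0 < sQ F1" using s2 by simp
        then obtain i2 where i2: "i2 \<in># F1" "1 \<le> i2" using sQ_pos by blast
        then have "i2 = 1" using one F1 by auto
        then obtain F2 where F2: "F1 = add_mset 1 F2" using i2 by (metis multi_member_split)
        let ?D = "add_mset 6 F2"
        have "sQ ?D = sQ E" using F F1 F2 True by simp
        moreover have "size ?D \<le> size E" using F F1 F2 by simp
        ultimately show ?thesis using True by (intro exI[of _ ?D]) auto
      next
        case k5: False
        have small: "\<forall>i\<in>#F. i + 5 \<le> k"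
        proof
          fix i assume i: "i \<in># F"
          show "i + 5 \<le> k"
          proof (cases "i = 0")
            case True
            obtain i1 where i1: "i1 \<in># F" "1 \<le> i1" using sQ_pos Fpos by blast
            then show ?thesis using nj k5 True by auto
          next
            case False then show ?thesis using nj k5 i by auto
          qed
        qed
        obtain i1 where i1: "i1 \<in># F" "1 \<le> i1" using sQ_pos Fpos by blast
        have k6: "6 \<le> k" using small i1 by auto
        define t where "t = k - 6"
        have kt: "k = t + 6" using k6 t_def by simp
        have "Q (Suc k) = Q k + Q (t+2)" using rec2[of t] kt by (simp add: ac_simps)
        then have sF2: "Q (Suc (t+1)) \<le> sQ F" using sF by simp
        have Fle2: "\<forall>i\<in>#F. i \<le> t + 1" using small kt by auto
        obtain F2 where F2: "sQ F2 = sQ F" "size F2 \<le> size F" "\<exists>i\<in>#F2. t + 1 < i"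
          using less.IH[of "t+1" F] Fle2 sF2 kt by auto
        show ?thesis
        proof (cases "\<exists>i\<in>#F2. k < i")
          case True
          then show ?thesis using F F2 by (intro exI[of _ "add_mset k F2"]) auto
        next
          case False
          obtain j where j: "j \<in># F2" "t + 1 < j" using F2(3) by blast
          have "j \<le> k" using False j by auto
          then obtain D' where D': "sQ D' = Q k + sQ F2" "size D' \<le> Suc (size F2)" "\<exists>i\<in>#D'. k < i"
            using pairstep[of j F2 k] j kt by auto
          then show ?thesis using F F2 by (intro exI[of _ D']) auto
        qed
      qed
    qed
  qed
  show ?case
  proof (cases "k \<in># D")
    case True then show ?thesis using inner less.prems by blast
  next
    case False
    show ?thesis
    proof (cases "k = 0")
      case True
      then have "sQ D = 0" using less.prems(1) by (intro sQ_zero) auto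
      then show ?thesis using less.prems(2) True by simp
    next
      case k0: False
      have le: "\<forall>i\<in>#D. i \<le> k - 1"
      proof
        fix i assume i: "i \<in># D"
        then have "i \<le> k" "i \<noteq> k" using less.prems(1) False by auto
        then show "i \<le> k - 1" by simp
      qed
      have "Q (Suc (k-1)) = Q k" using k0 by simp
      moreover have "Q k < Q (Suc k)" by (rule Q_Suc_gt)
      ultimately have "Q (Suc (k-1)) \<le> sQ D" using less.prems(2) by linarith
      then obtain D1 where D1: "sQ D1 = sQ D" "size D1 \<le> size D" "\<exists>i\<in>#D1. k - 1 < i"
        using less.IH[of "k-1" D] le k0 by auto
      show ?thesis
      proof (cases "\<exists>i\<in>#D1. k < i")
        case True then show ?thesis using D1 by blast
      next
        case False
        then have a1: "\<forall>i\<in>#D1. i \<le> k" by auto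
        obtain i where i: "i \<in># D1" "k - 1 < i" using D1(3) by blast
        then have "i = k" using a1 k0 by fastforce
        then have "k \<in># D1" using i by simp
        then obtain D' where "sQ D' = sQ D1" "size D' \<le> size D1" "\<exists>i\<in>#D'. k < i"
          using inner[of D1] a1 D1 less.prems(2) by auto
        then show ?thesis using D1 by (intro exI[of _ D']) auto
      qed
    qed
  qed
qed

lemma elem_bound: "i \<in># D \<Longrightarrow> sQ D < Q (Suc l) \<Longrightarrow> i \<le> l"
  using mem_le_sQ[of i D] by (metis Q_le_iff le_trans not_less_eq_eq less_imp_le_nat not_le)

lemma greedy_opt: "greedy6 m L \<Longrightarrow> sQ D = m \<Longrightarrow> length L \<le> size D"
proof (induction arbitrary: D rule: greedy6.induct)
  case (is_term n)
  then have "0 < sQ D" using Q_pos[of n] fq_Q[of n] by simp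
  then have "D \<noteq> {#}" by auto
  then show ?case by (simp add: Suc_leI nonempty_has_size)
next
  case six
  show ?case
  proof (rule ccontr)
    assume "\<not> length [fq 4, fq 2] \<le> size D"
    then have "size D \<le> 1" by simp
    then consider "D = {#}" | a where "D = {#a#}"
      by (metis le_SucE le_zero_eq size_1_singleton_mset size_eq_0_iff_empty One_nat_def)
    then show False
    proof cases
      case 1 then show False using six by simp
    next
      case (2 a)
      then have "Q a = 6" using six by simp
      moreover have "a \<le> 5 \<or> 6 \<le> a" by linarith
      moreover have "a \<le> 5 \<Longrightarrow> Q a \<le> 5" using Q_small[of a] by simp
      moreover have "6 \<le> a \<Longrightarrow> Q 6 \<le> Q a" by (simp only: Q_le_iff)
      ultimately show False by auto
    qed
  qed
next
  case (step m l L)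
  have fl: "fq l = Q l" "fq (l+1) = Q (Suc l)" using step.hyps(3) fq_Q by auto
  have ex: "\<exists>D'. sQ D' = m \<and> size D' \<le> size D \<and> l \<in># D'"
  proof (cases "l \<in># D")
    case True then show ?thesis using step.prems by blast
  next
    case False
    have le: "\<forall>i\<in>#D. i \<le> l - 1"
    proof
      fix i assume i: "i \<in># D"
      then have "i \<le> l" using elem_bound[of i D l] step.prems step.hyps(5) fl by simp
      moreover have "i \<noteq> l" using i False by auto
      ultimately show "i \<le> l - 1" by simp
    qed
    have "Q (Suc (l-1)) \<le> sQ D" using step.hyps(3,4) step.prems fl by simp
    then obtain D1 where D1: "sQ D1 = sQ D" "size D1 \<le> size D" "\<exists>i\<in>#D1. l - 1 < i"
      using Lp[of D "l-1"] le by auto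
    then obtain i where i: "i \<in># D1" "l - 1 < i" by blast
    have "i \<le> l" using elem_bound[of i D1 l] i D1 step.prems step.hyps(5) fl by simp
    then have "i = l" using i step.hyps(3) by simp
    then show ?thesis using D1 i step.prems by blast
  qed
  then obtain D' where D': "sQ D' = m" "size D' \<le> size D" "l \<in># D'" by blast
  then obtain D'' where D'': "D' = add_mset l D''" by (metis multi_member_split)
  have "sQ D'' = m - fq l" using D' D'' fl by simp
  then have "length L \<le> size D''" by (rule step.IH)
  then show ?case using D' D'' by simp
qed

lemma greedy_ex: "0 < m \<Longrightarrow> \<exists>L. greedy6 m L"
proof (induction m rule: less_induct)
  case (less m)
  show ?case
  proof (cases "\<exists>n\<ge>1. m = fq n")
    case True
    then obtain n where "n \<ge> 1" "m = fq n" by blast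
    then show ?thesis using greedy6.is_term by blast
  next
    case nt: False
    show ?thesis
    proof (cases "m = 6")
      case True then show ?thesis using greedy6.six by blast
    next
      case False
      obtain l where l: "1 \<le> l" "Q l \<le> m" "m < Q (Suc l)" using greatest[of m] less.prems by auto
      have "m \<noteq> Q l" using nt l fq_Q[of l] by auto
      then have lt: "Q l < m" using l by simp
      then have "0 < m - Q l" "m - Q l < m" using Q_pos[of l] l by auto
      then obtain L where "greedy6 (m - Q l) L" using less.IH by blast
      then have "greedy6 m (fq l # L)"
        using greedy6.step[of m l L] False nt l lt fq_Q[of l] fq_Q[of "l+1"] by auto
      then show ?thesis by blast
    qed
  qed
qed

lemma sQ_sum: "finite A \<Longrightarrow> sQ (\<Sum>i\<in>A. f i) = (\<Sum>i\<in>A. sQ (f i))"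
  by (induction A rule: finite_induct) auto

lemma size_sum: "finite A \<Longrightarrow> size (\<Sum>i\<in>A. f i) = (\<Sum>i\<in>A. size (f i :: nat multiset))"
  by (induction A rule: finite_induct) auto

lemma sQ_rep: "sQ (replicate_mset c i) = c * Q i"
  by (induction c) auto

theorem mainTheorem18:
  fixes m n :: nat and c :: "nat \<Rightarrow> nat"
  assumes "m > 0"
    and "m = (\<Sum>i = 1..n. c i * fq i)"
  shows "(\<exists>L. greedy6 m L) \<and> (\<forall>L. greedy6 m L \<longrightarrow> length L \<le> (\<Sum>i = 1..n. c i))"
proof
  show "\<exists>L. greedy6 m L" using greedy_ex assms(1) by blast
next
  define D where "D = (\<Sum>i\<in>{1..n}. replicate_mset (c i) i)"
  have "sQ D = (\<Sum>i = 1..n. c i * Q i)" unfolding D_def by (simp add: sQ_sum sQ_rep)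
  also have "\<dots> = m" unfolding assms(2) by (rule sum.cong) (auto simp: fq_Q)
  finally have sD: "sQ D = m" .
  have zD: "size D = (\<Sum>i = 1..n. c i)" unfolding D_def by (simp add: size_sum)
  show "\<forall>L. greedy6 m L \<longrightarrow> length L \<le> (\<Sum>i = 1..n. c i)"
    using greedy_opt sD zD by metis
qed

end
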